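(* Let $K_{m_1,m_2}$ be the complete bipartite graph with bipartition $(X,Y)$, $|X|=m_1$, $|Y|=m_2$, where $2\le m_1\le m_2$. If $S\subseteq X$ and $|S|\ge 2$, then $\kappa^*_{K_{m_1,m_2}}(S)=m_2$. If $S\subseteq Y$ and $|S|\ge 2$, then $\kappa^*_{K_{m_1,m_2}}(S)=m_1$.
   Context: For $S\subseteq V(G)$ with $|S|\ge 2$, an $S$-Steiner tree of $G$ is a subtree $T$ of $G$ with $S\subseteq V(T)$ all of whose leaves belong to $S$. A family of $S$-Steiner trees $T_1,\dots,T_k$ is completely independent if for all $1\le p<q\le k$: $E(T_p)\cap E(T_q)=\emptyset$, $V(T_p)\cap V(T_q)=S$, and for any two vertices $x_1,x_2\in S$ the $(x_1,x_2)$-paths in $T_p$ and in $T_q$ are internally disjoint. $\kappa^*_G(S)$ is the maximum number of trees in a completely independent family of $S$-Steiner trees in $G$. *)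

theory Defs
  imports Main
begin

type_synonym 'a graph = "'a set \<times> 'a set set"

definition verts :: "'a graph \<Rightarrow> 'a set" where "verts G = fst G"
definition edges :: "'a graph \<Rightarrow> 'a set set" where "edges G = snd G"

definition is_graph :: "'a graph \<Rightarrow> bool" where
  "is_graph G \<longleftrightarrow> (\<forall>e\<in>edges G. \<exists>u v. e = {u, v} \<and> u \<noteq> v \<and> u \<in> verts G \<and> v \<in> verts G)"

definition is_path :: "'a graph \<Rightarrow> 'a list \<Rightarrow> bool" where
  "is_path G xs \<longleftrightarrow> xs \<noteq> [] \<and> distinct xs \<and> set xs \<subseteq> verts G \<and>
     (\<forall>i. Suc i < length xs \<longrightarrow> {xs ! i, xs ! Suc i} \<in> edges G)"

definition is_path_between :: "'a graph \<Rightarrow> 'a \<Rightarrow> 'a \<Rightarrow> 'a list \<Rightarrow> bool" where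
  "is_path_between G u v xs \<longleftrightarrow> is_path G xs \<and> hd xs = u \<and> last xs = v"

definition internal_verts :: "'a list \<Rightarrow> 'a set" where
  "internal_verts xs = set (butlast (tl xs))"

definition connected_graph :: "'a graph \<Rightarrow> bool" where
  "connected_graph G \<longleftrightarrow> verts G \<noteq> {} \<and>
     (\<forall>u\<in>verts G. \<forall>v\<in>verts G. \<exists>xs. is_path_between G u v xs)"

definition is_cycle :: "'a graph \<Rightarrow> 'a list \<Rightarrow> bool" where
  "is_cycle G xs \<longleftrightarrow> is_path G xs \<and> length xs \<ge> 3 \<and> {last xs, hd xs} \<in> edges G"

definition is_tree :: "'a graph \<Rightarrow> bool" where
  "is_tree T \<longleftrightarrow> is_graph T \<and> finite (verts T) \<and> connected_graph T \<and> \<not> (\<exists>xs. is_cycle T xs)"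

definition subgraph :: "'a graph \<Rightarrow> 'a graph \<Rightarrow> bool" where
  "subgraph H G \<longleftrightarrow> is_graph H \<and> verts H \<subseteq> verts G \<and> edges H \<subseteq> edges G"

definition degree :: "'a graph \<Rightarrow> 'a \<Rightarrow> nat" where
  "degree G v = card {e \<in> edges G. v \<in> e}"

definition leaves :: "'a graph \<Rightarrow> 'a set" where
  "leaves T = {v \<in> verts T. degree T v = 1}"

definition steiner_tree :: "'a graph \<Rightarrow> 'a set \<Rightarrow> 'a graph \<Rightarrow> bool" where
  "steiner_tree G S T \<longleftrightarrow> subgraph T G \<and> is_tree T \<and> S \<subseteq> verts T \<and> leaves T \<subseteq> S"

definition CIST_family :: "'a graph \<Rightarrow> 'a set \<Rightarrow> (nat \<Rightarrow> 'a graph) \<Rightarrow> nat \<Rightarrow> bool" where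
  "CIST_family G S T k \<longleftrightarrow>
     (\<forall>i<k. steiner_tree G S (T i)) \<and>
     (\<forall>p<k. \<forall>q<k. p \<noteq> q \<longrightarrow>
        edges (T p) \<inter> edges (T q) = {} \<and>
        verts (T p) \<inter> verts (T q) = S \<and>
        (\<forall>x1\<in>S. \<forall>x2\<in>S. \<forall>P Q. is_path_between (T p) x1 x2 P \<longrightarrow>
            is_path_between (T q) x1 x2 Q \<longrightarrow> internal_verts P \<inter> internal_verts Q = {}))"

definition kappa_star :: "'a graph \<Rightarrow> 'a set \<Rightarrow> nat" where
  "kappa_star G S = (GREATEST k. \<exists>T. CIST_family G S T k)"

definition complete_bipartite :: "'a set \<Rightarrow> 'a set \<Rightarrow> 'a graph" where
  "complete_bipartite X Y = (X \<union> Y, {{x, y} | x y. x \<in> X \<and> y \<in> Y})"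

end

theory Submission
  imports Defs
begin

abbreviation star :: "'a set \<Rightarrow> 'a \<Rightarrow> 'a graph" where
  "star S y \<equiv> (S \<union> {y}, (\<lambda>s. {s, y}) ` S)"

lemma star_edge: "{a, b} \<in> (\<lambda>s. {s, y}) ` S \<Longrightarrow> a = y \<or> b = y"
  by (auto simp: doubleton_eq_iff)

lemma internal_nth:
  assumes "v \<in> internal_verts xs"
  shows "\<exists>i. 0 < i \<and> Suc i < length xs \<and> v = xs ! i"
proof -
  from assms obtain j where j: "j < length (butlast (tl xs))" "v = butlast (tl xs) ! j"
    unfolding internal_verts_def by (auto simp: in_set_conv_nth)
  have "v = xs ! Suc j" using j by (simp add: nth_butlast nth_tl)
  moreover have "Suc (Suc j) < length xs" using j by simp
  ultimately show ?thesis by (intro exI[of _ "Suc j"]) simp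
qed

lemma star_internal:
  assumes "is_path (star S y) P"
  shows "internal_verts P \<subseteq> {y}"
proof
  fix v assume "v \<in> internal_verts P"
  from internal_nth[OF this] obtain i where i: "0 < i" "Suc i < length P" "v = P ! i" by blast
  show "v \<in> {y}"
  proof (rule ccontr)
    assume "v \<notin> {y}"
    have ed: "\<And>j. Suc j < length P \<Longrightarrow> {P ! j, P ! Suc j} \<in> (\<lambda>s. {s, y}) ` S"
      and d: "distinct P"
      using assms unfolding is_path_def edges_def by simp_all
    have si: "Suc (i - 1) = i" using i by simp
    have e1: "{P ! (i - 1), P ! i} \<in> (\<lambda>s. {s, y}) ` S"
      using ed[of "i - 1"] i si by simp
    have e2: "{P ! i, P ! Suc i} \<in> (\<lambda>s. {s, y}) ` S"
      using ed[of i] i by simp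
    have vy: "P ! i \<noteq> y" using i \<open>v \<notin> {y}\<close> by simp
    have "P ! (i - 1) = y" using star_edge[OF e1] vy by blast
    moreover have "P ! Suc i = y" using star_edge[OF e2] vy by blast
    moreover have "i - 1 < length P" "Suc i < length P" using i by auto
    ultimately have "i - 1 = Suc i" using d nth_eq_iff_index_eq[of P "i - 1" "Suc i"] by simp
    then show False by simp
  qed
qed

lemma star_acyclic: "\<not> is_cycle (star S y) xs"
proof
  assume c: "is_cycle (star S y) xs"
  then have d: "distinct xs" and l: "length xs \<ge> 3"
    and ed: "\<And>i. Suc i < length xs \<Longrightarrow> {xs ! i, xs ! Suc i} \<in> (\<lambda>s. {s, y}) ` S"
    and lh: "{last xs, hd xs} \<in> (\<lambda>s. {s, y}) ` S"
    unfolding is_cycle_def is_path_def edges_def by auto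
  have e0: "xs ! 0 = y \<or> xs ! 1 = y" using star_edge[OF ed[of 0]] l by auto
  have e1: "xs ! 1 = y \<or> xs ! 2 = y" using star_edge[OF ed[of 1]] l by (auto simp: numeral_2_eq_2)
  have hd: "hd xs = xs ! 0" using l by (cases xs) auto
  have la: "last xs = xs ! (length xs - 1)" using l by (subst last_conv_nth) auto
  have ne: "\<And>i j. i < length xs \<Longrightarrow> j < length xs \<Longrightarrow> xs ! i = xs ! j \<Longrightarrow> i = j"
    using d nth_eq_iff_index_eq by blast
  show False
  proof (cases "xs ! 1 = y")
    case True
    have "xs ! 0 \<noteq> xs ! 1"
    proof
      assume "xs ! 0 = xs ! 1"
      moreover have "0 < length xs" "1 < length xs" using l by auto
      ultimately have "(0::nat) = 1" using ne[of 0 1] by blast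
      then show False by simp
    qed
    then have "xs ! 0 \<noteq> y" using True by simp
    then have "last xs = y" using star_edge[OF lh] hd by auto
    then have "xs ! (length xs - 1) = xs ! 1" using True la by simp
    moreover have "length xs - 1 < length xs" "1 < length xs" using l by auto
    ultimately have "length xs - 1 = 1" using ne[of "length xs - 1" 1] by blast
    then show False using l by simp
  next
    case False
    then have "xs ! 0 = y" "xs ! 2 = y" using e0 e1 by auto
    then have "xs ! 0 = xs ! 2" by simp
    moreover have "0 < length xs" "2 < length xs" using l by auto
    ultimately have "(0::nat) = 2" using ne[of 0 2] by blast
    then show False by simp
  qed
qed

lemma two_elems: "2 \<le> card S \<Longrightarrow> \<exists>a b. a \<in> S \<and> b \<in> S \<and> a \<noteq> b"
  by (metis One_nat_def Suc_1 card.infinite card_le_Suc0_iff_eq not_less_eq_eq zero_le)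

lemma star_steiner:
  assumes "X \<inter> Y = {}" "S \<subseteq> X" "2 \<le> card S" "y \<in> Y"
  shows "steiner_tree (complete_bipartite X Y) S (star S y)"
proof -
  have yS: "y \<notin> S" using assms by auto
  have fin: "finite S" using assms(3) by (metis card.infinite not_numeral_le_zero)
  have g: "is_graph (star S y)"
    unfolding is_graph_def edges_def verts_def using yS by auto
  have sub: "subgraph (star S y) (complete_bipartite X Y)"
    unfolding subgraph_def using g assms
    by (auto simp: verts_def edges_def complete_bipartite_def)
  have conn: "connected_graph (star S y)"
    unfolding connected_graph_def
  proof (intro conjI ballI)
    show "verts (star S y) \<noteq> {}" by (simp add: verts_def)
  next
    fix u v assume u: "u \<in> verts (star S y)" and v: "v \<in> verts (star S y)"
    show "\<exists>xs. is_path_between (star S y) u v xs"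
    proof (cases "u = v")
      case True
      then show ?thesis using u
        by (intro exI[of _ "[u]"]) (auto simp: is_path_between_def is_path_def)
    next
      case False
      show ?thesis
      proof (cases "u = y")
        case True
        then have "v \<in> S" using v False by (auto simp: verts_def)
        then show ?thesis using True False
          by (intro exI[of _ "[u, v]"])
            (auto simp: is_path_between_def is_path_def verts_def edges_def insert_commute)
      next
        case uy: False
        then have uS: "u \<in> S" using u by (auto simp: verts_def)
        show ?thesis
        proof (cases "v = y")
          case True
          then show ?thesis using uS False
            by (intro exI[of _ "[u, v]"])
              (auto simp: is_path_between_def is_path_def verts_def edges_def)
        next
          case vy: False
          then have vS: "v \<in> S" using v by (auto simp: verts_def)
          have i3: "\<And>i. Suc i < 3 \<Longrightarrow> i = 0 \<or> i = 1" by auto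
          have "is_path (star S y) [u, y, v]"
            unfolding is_path_def
          proof (intro conjI allI impI)
            fix i assume "Suc i < length [u, y, v]"
            then have "i = 0 \<or> i = 1" by auto
            then show "{[u, y, v] ! i, [u, y, v] ! Suc i} \<in> edges (star S y)"
              using uS vS by (auto simp: edges_def insert_commute)
          qed (use uS vS yS False in \<open>auto simp: verts_def\<close>)
          then show ?thesis by (intro exI[of _ "[u, y, v]"]) (simp add: is_path_between_def)
        qed
      qed
    qed
  qed
  have tree: "is_tree (star S y)"
    unfolding is_tree_def using g conn star_acyclic[of S y] fin by (simp add: verts_def)
  have inj: "inj_on (\<lambda>s. {s, y}) S" using yS by (auto simp: inj_on_def doubleton_eq_iff)
  have "{e \<in> edges (star S y). y \<in> e} = (\<lambda>s. {s, y}) ` S" by (auto simp: edges_def)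
  then have "degree (star S y) y = card S" using inj card_image by (simp add: degree_def)
  then have "leaves (star S y) \<subseteq> S" using assms(3) by (auto simp: leaves_def verts_def)
  then show ?thesis using sub tree by (auto simp: steiner_tree_def verts_def)
qed

lemma lower:
  assumes "X \<inter> Y = {}" "S \<subseteq> X" "2 \<le> card S" "finite Y"
  shows "\<exists>T. CIST_family (complete_bipartite X Y) S T (card Y)"
proof -
  obtain h where h: "bij_betw h {0..<card Y} Y" using ex_bij_betw_nat_finite assms(4) by blast
  define T where "T = (\<lambda>i. star S (h i))"
  have hY: "\<And>i. i < card Y \<Longrightarrow> h i \<in> Y" using h by (auto simp: bij_betw_def)
  have hinj: "\<And>p q. p < card Y \<Longrightarrow> q < card Y \<Longrightarrow> p \<noteq> q \<Longrightarrow> h p \<noteq> h q"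
    using h by (auto simp: bij_betw_def inj_on_def)
  have "CIST_family (complete_bipartite X Y) S T (card Y)"
    unfolding CIST_family_def
  proof (intro conjI allI impI)
    fix i assume "i < card Y"
    then show "steiner_tree (complete_bipartite X Y) S (T i)"
      using star_steiner[OF assms(1-3) hY[OF \<open>i < card Y\<close>]] by (simp add: T_def)
  next
    fix p q assume pq: "p < card Y" "q < card Y" "p \<noteq> q"
    have np: "h p \<notin> X" "h q \<notin> X" using hY pq assms(1) by auto
    have ne: "h p \<noteq> h q" using hinj pq by auto
    show "edges (T p) \<inter> edges (T q) = {}"
    proof (rule ccontr)
      assume "edges (T p) \<inter> edges (T q) \<noteq> {}"
      then obtain s s' where ss: "s \<in> S" "s' \<in> S" "{s, h p} = {s', h q}"
        by (auto simp: T_def edges_def)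
      then have "h p \<in> {s', h q}" by blast
      then have "h p = s'" using ne by blast
      then show False using ss np assms(2) by blast
    qed
    have "h p \<notin> S" "h q \<notin> S" using np assms(2) by blast+
    then show "verts (T p) \<inter> verts (T q) = S"
      using ne by (auto simp: T_def verts_def)
    show "\<forall>x1\<in>S. \<forall>x2\<in>S. \<forall>P Q. is_path_between (T p) x1 x2 P \<longrightarrow>
            is_path_between (T q) x1 x2 Q \<longrightarrow> internal_verts P \<inter> internal_verts Q = {}"
    proof (intro ballI allI impI)
      fix x1 x2 P Q
      assume "is_path_between (T p) x1 x2 P" "is_path_between (T q) x1 x2 Q"
      then have "is_path (star S (h p)) P" "is_path (star S (h q)) Q"
        unfolding is_path_between_def T_def by simp_all
      then have "internal_verts P \<subseteq> {h p}" "internal_verts Q \<subseteq> {h q}"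
        using star_internal by simp_all
      then show "internal_verts P \<inter> internal_verts Q = {}" using ne by auto
    qed
  qed
  then show ?thesis by blast
qed

lemma tree_has_Y:
  assumes "X \<inter> Y = {}" "S \<subseteq> X" "2 \<le> card S"
    and st: "steiner_tree (complete_bipartite X Y) S T"
  shows "\<exists>y\<in>Y. y \<in> verts T"
proof -
  obtain a b where ab: "a \<in> S" "b \<in> S" "a \<noteq> b" using two_elems assms(3) by blast
  have "connected_graph T" "S \<subseteq> verts T" using st by (auto simp: steiner_tree_def is_tree_def)
  then obtain xs where xs: "is_path_between T a b xs" using ab unfolding connected_graph_def by blast
  then have ne: "xs \<noteq> []" and hd: "hd xs = a" and la: "last xs = b"
    and ed: "\<And>i. Suc i < length xs \<Longrightarrow> {xs ! i, xs ! Suc i} \<in> edges T"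
    and sv: "set xs \<subseteq> verts T"
    unfolding is_path_between_def is_path_def by auto
  have "length xs \<noteq> 1"
  proof
    assume "length xs = 1"
    then obtain z where "xs = [z]" by (cases xs) auto
    then show False using hd la ab by simp
  qed
  then have l2: "Suc 0 < length xs" using ne by (cases xs) auto
  have "{xs ! 0, xs ! 1} \<in> edges (complete_bipartite X Y)"
    using ed[of 0] l2 st by (auto simp: steiner_tree_def subgraph_def)
  then obtain x y where "{xs ! 0, xs ! 1} = {x, y}" "y \<in> Y"
    by (auto simp: complete_bipartite_def edges_def)
  moreover have "0 < length xs" "1 < length xs" using l2 by auto
  then have "xs ! 0 \<in> set xs" "xs ! 1 \<in> set xs" using nth_mem by blast+
  then have "xs ! 0 \<in> verts T" "xs ! 1 \<in> verts T" using sv by auto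
  ultimately show ?thesis by (auto simp: doubleton_eq_iff)
qed

lemma upper:
  assumes "X \<inter> Y = {}" "S \<subseteq> X" "2 \<le> card S" "finite Y"
    and c: "CIST_family (complete_bipartite X Y) S T k"
  shows "k \<le> card Y"
proof -
  have ex: "\<exists>y. y \<in> Y \<and> y \<in> verts (T i)" if "i < k" for i
  proof -
    have "steiner_tree (complete_bipartite X Y) S (T i)"
      using c that unfolding CIST_family_def by simp
    from tree_has_Y[OF assms(1-3) this] show ?thesis by blast
  qed
  define f where "f = (\<lambda>i. SOME y. y \<in> Y \<and> y \<in> verts (T i))"
  have f: "f i \<in> Y \<and> f i \<in> verts (T i)" if "i < k" for i
    unfolding f_def using someI_ex[OF ex[OF that]] .
  have "inj_on f {..<k}"
  proof (rule inj_onI, rule ccontr)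
    fix i j assume ij: "i \<in> {..<k}" "j \<in> {..<k}" "f i = f j" "i \<noteq> j"
    then have "verts (T i) \<inter> verts (T j) = S" using c unfolding CIST_family_def by simp
    moreover have "f i \<in> verts (T i)" using f[of i] ij(1) by simp
    moreover have "f j \<in> verts (T j)" using f[of j] ij(2) by simp
    ultimately have "f i \<in> S" using ij(3) by (metis IntI)
    then show False using f ij assms(1,2) by auto
  qed
  moreover have "f ` {..<k} \<subseteq> Y" using f by auto
  ultimately have "card {..<k} \<le> card Y" using card_inj_on_le assms(4) by blast
  then show ?thesis by simp
qed

lemma kappa_side:
  assumes "X \<inter> Y = {}" "S \<subseteq> X" "2 \<le> card S" "finite Y"
  shows "kappa_star (complete_bipartite X Y) S = card Y"
  unfolding kappa_star_def
  by (rule Greatest_equality) (use lower[OF assms] upper[OF assms] in auto)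

lemma cb_sym: "complete_bipartite X Y = complete_bipartite Y X"
  unfolding complete_bipartite_def by (auto simp: insert_commute)

theorem theorem3p1:
  fixes X Y :: "'a set" and m1 m2 :: nat
  assumes "finite X" and "finite Y" and "X \<inter> Y = {}"
    and "card X = m1" and "card Y = m2" and "2 \<le> m1" and "m1 \<le> m2"
  shows "(\<forall>S. S \<subseteq> X \<and> card S \<ge> 2 \<longrightarrow> kappa_star (complete_bipartite X Y) S = m2) \<and>
         (\<forall>S. S \<subseteq> Y \<and> card S \<ge> 2 \<longrightarrow> kappa_star (complete_bipartite X Y) S = m1)"
proof (intro conjI allI impI)
  fix S assume "S \<subseteq> X \<and> card S \<ge> 2"
  then show "kappa_star (complete_bipartite X Y) S = m2"
    using kappa_side[of X Y S] assms by auto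
next
  fix S assume "S \<subseteq> Y \<and> card S \<ge> 2"
  moreover have "Y \<inter> X = {}" using assms by auto
  ultimately show "kappa_star (complete_bipartite X Y) S = m1"
    using kappa_side[of Y X S] assms cb_sym[of X Y] by auto
qed

end
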